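(* Let $\mathbb{X}^0_1=\mathbb{X}^1_1:=2^\omega$, $\mathbb{A}^0_1:=\{(0^\infty,0^\infty)\}$ and $\mathbb{A}^1_1:=\{(0^i1\alpha,0^i1\beta)\mid i\in\omega,\ \alpha,\beta\in2^\omega\}$. Let $X,Y$ be Polish spaces and $A_0,A_1$ disjoint subsets of $X\times Y$. Then exactly one of the following holds: (a) there is a countable union $S$ of sets $U\times V$ with $U$ open in $X$ and $V$ open in $Y$ such that $A_0\subseteq S$ and $S\cap A_1=\emptyset$; (b) there are continuous maps $f,g:2^\omega\to X,Y$ respectively (i.e. $f:2^\omega\to X$, $g:2^\omega\to Y$) such that $(f\times g)(\mathbb{A}^0_1)\subseteq A_0$ and $(f\times g)(\mathbb{A}^1_1)\subseteq A_1$.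
   Context: $0^i1\alpha$ denotes the element of $2^\omega$ consisting of $i$ zeros, then $1$, then $\alpha$; $0^\infty$ is the constant zero sequence. $(f\times g)(x,y)=(f(x),g(y))$. *)

theory Defs
  imports "HOL-Analysis.Analysis"
begin

definition cantor_space :: "(nat \<Rightarrow> bool) topology" where
  "cantor_space = product_topology (\<lambda>_. discrete_topology UNIV) UNIV"

text \<open>The sequence 0^i 1 alpha: i zeros, then 1, then alpha.\<close>
definition zo :: "nat \<Rightarrow> (nat \<Rightarrow> bool) \<Rightarrow> (nat \<Rightarrow> bool)" where
  "zo i \<alpha> = (\<lambda>n. if n < i then False else if n = i then True else \<alpha> (n - Suc i))"

definition A01 :: "((nat \<Rightarrow> bool) \<times> (nat \<Rightarrow> bool)) set" where
  "A01 = {((\<lambda>_. False), (\<lambda>_. False))}"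

definition A11 :: "((nat \<Rightarrow> bool) \<times> (nat \<Rightarrow> bool)) set" where
  "A11 = {(zo i \<alpha>, zo i \<beta>) | i \<alpha> \<beta>. True}"

end

theory Submission
  imports Defs
begin

lemma topspace_cantor [simp]: "topspace cantor_space = UNIV"
  by (simp add: cantor_space_def)

lemma openin_coord: "openin cantor_space {b. b j = v}"
proof -
  have "openin cantor_space {b \<in> topspace cantor_space. b j \<in> {v}}"
    unfolding cantor_space_def
    by (rule openin_continuous_map_preimage[OF continuous_map_product_projection]) auto
  then show ?thesis by simp
qed

lemma openin_cyl: "openin cantor_space {b. \<forall>j<N. b j = c j}"
proof (induction N)
  case 0
  then show ?case using openin_topspace[of cantor_space] by simp
next
  case (Suc N)
  have "{b. \<forall>j<Suc N. b j = c j} = {b. \<forall>j<N. b j = c j} \<inter> {b. b N = c N}"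
    by (auto simp: less_Suc_eq)
  then show ?case using openin_Int[OF Suc.IH openin_coord] by simp
qed

lemma zo_least: "(LEAST n. zo i \<alpha> n) = i"
  by (rule Least_equality) (auto simp: zo_def split: if_splits)

lemma zo_ex: "\<exists>n. zo i \<alpha> n"
  by (auto simp: zo_def intro!: exI[of _ i])

lemma cont_seq:
  fixes xs :: "nat \<Rightarrow> 'a::topological_space"
  assumes lim: "xs \<longlonglongrightarrow> x"
  shows "continuous_map cantor_space euclidean (\<lambda>a. if \<exists>i. a i then xs (LEAST i. a i) else x)"
    (is "continuous_map _ _ ?f")
  unfolding continuous_map_def
proof (intro conjI allI impI)
  fix U :: "'a set" assume "openin euclidean U"
  then have oU: "open U" by simp
  show "openin cantor_space {a \<in> topspace cantor_space. ?f a \<in> U}"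
  proof (subst openin_subopen, intro ballI)
    fix a assume a: "a \<in> {a \<in> topspace cantor_space. ?f a \<in> U}"
    show "\<exists>T. openin cantor_space T \<and> a \<in> T \<and> T \<subseteq> {a \<in> topspace cantor_space. ?f a \<in> U}"
    proof (cases "\<exists>i. a i")
      case True
      define k where "k = (LEAST i. a i)"
      have ak: "a k" unfolding k_def by (rule LeastI_ex[OF True])
      have lt: "\<And>j. j < k \<Longrightarrow> \<not> a j" unfolding k_def by (rule not_less_Least)
      let ?T = "{b. \<forall>j<Suc k. b j = a j}"
      have "?T \<subseteq> {a \<in> topspace cantor_space. ?f a \<in> U}"
      proof
        fix b assume b: "b \<in> ?T"
        have "(LEAST i. b i) = k"
        proof (rule Least_equality)
          show "b k" using b ak by auto
          fix j assume "b j"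
          show "k \<le> j"
          proof (rule ccontr)
            assume "\<not> k \<le> j"
            then have "j < k" by simp
            then show False using b lt \<open>b j\<close> by auto
          qed
        qed
        moreover have "\<exists>i. b i" using b ak by auto
        ultimately have "?f b = xs k" by simp
        moreover have "?f a = xs k" using True k_def by simp
        ultimately have "?f b \<in> U" using a by simp
        then show "b \<in> {a \<in> topspace cantor_space. ?f a \<in> U}" by simp
      qed
      moreover have "a \<in> ?T" by simp
      ultimately show ?thesis using openin_cyl[of "Suc k" a] by blast
    next
      case False
      have "?f a = x" using False by (simp only: if_not_P if_False)
      then have "x \<in> U" using a by simp
      then have "eventually (\<lambda>i. xs i \<in> U) sequentially"
        using lim oU by (simp add: tendsto_def)
      then obtain N where N: "\<And>i. i \<ge> N \<Longrightarrow> xs i \<in> U" by (auto simp: eventually_sequentially)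
      let ?T = "{b. \<forall>j<N. b j = a j}"
      have "?T \<subseteq> {a \<in> topspace cantor_space. ?f a \<in> U}"
      proof
        fix b assume b: "b \<in> ?T"
        show "b \<in> {a \<in> topspace cantor_space. ?f a \<in> U}"
        proof (cases "\<exists>i. b i")
          case True
          have "(LEAST i. b i) \<ge> N"
          proof (rule ccontr)
            assume "\<not> ?thesis"
            then have lN: "(LEAST i. b i) < N" by simp
            have "b (LEAST i. b i)" by (rule LeastI_ex[OF True])
            moreover have "b (LEAST i. b i) = a (LEAST i. b i)" using b lN by simp
            ultimately show False using False by simp
          qed
          then have "xs (LEAST i. b i) \<in> U" by (rule N)
          then show ?thesis using True by simp
        next
          case False
          then have "?f b = x" by (simp only: if_not_P if_False)
          then show ?thesis using \<open>x \<in> U\<close> by simp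
        qed
      qed
      moreover have "a \<in> ?T" by simp
      ultimately show ?thesis using openin_cyl[of N a] by blast
    qed
  qed
qed auto

lemma f_zo: "(\<lambda>a. if \<exists>i. a i then xs (LEAST i. a i) else x) (zo i \<alpha>) = xs i"
  using zo_ex zo_least by auto

lemma lim_zo: "limitin cantor_space (\<lambda>i. zo i \<alpha>) (\<lambda>_. False) sequentially"
  unfolding cantor_space_def limitin_componentwise
proof (intro conjI ballI)
  fix j :: nat
  show "limitin (discrete_topology UNIV) (\<lambda>c. zo c \<alpha> j) False sequentially"
    unfolding limitin_def
  proof (intro conjI allI impI)
    fix U assume "openin (discrete_topology UNIV) U \<and> False \<in> U"
    then have "False \<in> U" by simp
    moreover have "eventually (\<lambda>c. zo c \<alpha> j = False) sequentially"
      unfolding eventually_sequentially by (rule exI[of _ "Suc j"]) (auto simp: zo_def)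
    ultimately show "eventually (\<lambda>c. zo c \<alpha> j \<in> U) sequentially"
      by (auto elim: eventually_mono)
  qed auto
qed auto

theorem corollary3p8:
  fixes A0 A1 :: "('a::polish_space \<times> 'b::polish_space) set"
  assumes "A0 \<inter> A1 = {}"
  shows "(\<exists>\<R>. countable \<R> \<and> (\<forall>W\<in>\<R>. \<exists>U V. open U \<and> open V \<and> W = U \<times> V)
              \<and> A0 \<subseteq> \<Union>\<R> \<and> \<Union>\<R> \<inter> A1 = {})
       \<noteq> (\<exists>f g. continuous_map cantor_space euclidean f \<and> continuous_map cantor_space euclidean g
              \<and> (\<lambda>(x, y). (f x, g y)) ` A01 \<subseteq> A0 \<and> (\<lambda>(x, y). (f x, g y)) ` A11 \<subseteq> A1)"
    (is "?P \<noteq> ?Q")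
proof -
  have 1: "\<not> ?Q" if ?P
  proof
    assume ?Q
    then obtain f g where f: "continuous_map cantor_space euclidean f"
      and g: "continuous_map cantor_space euclidean g"
      and h0: "(\<lambda>(x, y). (f x, g y)) ` A01 \<subseteq> A0" and h1: "(\<lambda>(x, y). (f x, g y)) ` A11 \<subseteq> A1"
      by (elim exE conjE) assumption
    obtain R where R: "\<forall>W\<in>R. \<exists>U V. open U \<and> open V \<and> W = U \<times> V" "A0 \<subseteq> \<Union>R" "\<Union>R \<inter> A1 = {}"
      using \<open>?P\<close> by (elim exE conjE) assumption
    let ?z = "(\<lambda>_::nat. False)"
    have "(f ?z, g ?z) \<in> A0" using h0 by (auto simp: A01_def)
    then have "(f ?z, g ?z) \<in> \<Union>R" by (rule subsetD[OF R(2)])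
    then obtain W where W: "W \<in> R" "(f ?z, g ?z) \<in> W" by (rule UnionE)
    have "\<exists>U V. open U \<and> open V \<and> W = U \<times> V" by (rule bspec[OF R(1) W(1)])
    then obtain U V where UV: "open U" "open V" "W = U \<times> V" by blast
    have lf: "((\<lambda>i. f (zo i ?z)) \<longlongrightarrow> f ?z) sequentially"
      using continuous_map_limit[OF f lim_zo[of ?z]] by (simp add: o_def)
    have lg: "((\<lambda>i. g (zo i ?z)) \<longlongrightarrow> g ?z) sequentially"
      using continuous_map_limit[OF g lim_zo[of ?z]] by (simp add: o_def)
    have "eventually (\<lambda>i. f (zo i ?z) \<in> U) sequentially"
      using lf UV W by (simp add: tendsto_def)
    moreover have "eventually (\<lambda>i. g (zo i ?z) \<in> V) sequentially"
      using lg UV W by (simp add: tendsto_def)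
    ultimately have "eventually (\<lambda>i. f (zo i ?z) \<in> U \<and> g (zo i ?z) \<in> V) sequentially"
      by (rule eventually_conj)
    then obtain N where N: "\<And>n. n \<ge> N \<Longrightarrow> f (zo n ?z) \<in> U \<and> g (zo n ?z) \<in> V"
      unfolding eventually_sequentially by blast
    obtain i where i: "f (zo i ?z) \<in> U" "g (zo i ?z) \<in> V" using N[OF order_refl] by blast
    have "(zo i ?z, zo i ?z) \<in> A11" unfolding A11_def by blast
    then have "(\<lambda>(x, y). (f x, g y)) (zo i ?z, zo i ?z) \<in> (\<lambda>(x, y). (f x, g y)) ` A11"
      by (rule imageI)
    then have "(\<lambda>(x, y). (f x, g y)) (zo i ?z, zo i ?z) \<in> A1" by (rule subsetD[OF h1])
    then have in1: "(f (zo i ?z), g (zo i ?z)) \<in> A1" by simp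
    have "(f (zo i ?z), g (zo i ?z)) \<in> W" using i UV(3) by simp
    then have "(f (zo i ?z), g (zo i ?z)) \<in> \<Union>R" using W(1) by (rule UnionI[rotated])
    then have "(f (zo i ?z), g (zo i ?z)) \<in> \<Union>R \<inter> A1" using in1 by (rule IntI)
    then show False using R(3) by simp
  qed
  have 2: ?Q if "\<not> ?P"
  proof -
    define F where "F = {U \<times> V | U V. open U \<and> open V \<and> (U \<times> V) \<inter> A1 = {}}"
    obtain F' where F': "F' \<subseteq> F" "countable F'" "\<Union>F' = \<Union>F"
      using Lindelof_openin[of F UNIV] unfolding F_def by (auto intro: open_Times)
    have "\<not> A0 \<subseteq> \<Union>F"
    proof
      assume "A0 \<subseteq> \<Union>F"
      have ?P
      proof (intro exI[of _ F'] conjI ballI)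
        show "countable F'" by (rule F'(2))
        fix W assume "W \<in> F'" then have "W \<in> F" using F'(1) by blast
        then show "\<exists>U V. open U \<and> open V \<and> W = U \<times> V" unfolding F_def by blast
      next
        show "A0 \<subseteq> \<Union>F'" using \<open>A0 \<subseteq> \<Union>F\<close> F'(3) by simp
      next
        show "\<Union>F' \<inter> A1 = {}" unfolding F'(3) unfolding F_def by blast
      qed
      then show False using that by blast
    qed
    then obtain x y where xy: "(x, y) \<in> A0" "(x, y) \<notin> \<Union>F" by auto
    have "\<exists>p. p \<in> A1 \<and> dist (fst p) x < 1 / (Suc n) \<and> dist (snd p) y < 1 / (Suc n)" for n :: nat
    proof (rule ccontr)
      assume "\<not> ?thesis"
      then have "ball x (1 / Suc n) \<times> ball y (1 / Suc n) \<inter> A1 = {}"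
        by (force simp: dist_commute)
      then have "ball x (1 / Suc n) \<times> ball y (1 / Suc n) \<in> F"
        unfolding F_def using open_ball by blast
      moreover have "(x, y) \<in> ball x (1 / Suc n) \<times> ball y (1 / Suc n)" by simp
      ultimately show False using xy by blast
    qed
    then obtain p where p: "\<And>n. p n \<in> A1 \<and> dist (fst (p n)) x < 1 / (Suc n) \<and> dist (snd (p n)) y < 1 / (Suc n)"
      by metis
    have lim1: "\<exists>N. \<forall>n\<ge>N. dist (h (p n)) z < r"
      if hz: "\<And>n. dist (h (p n)) z < 1 / Suc n" and r: "r > 0" for h :: "'a \<times> 'b \<Rightarrow> 'c::metric_space" and z r
    proof -
      obtain N :: nat where N: "1 / Suc N < r" using nat_approx_posE r by blast
      have "dist (h (p n)) z < r" if "n \<ge> N" for n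
      proof -
        have "1 / real (Suc n) \<le> 1 / Suc N" using that by (simp add: frac_le)
        then show ?thesis using hz[of n] N by linarith
      qed
      then show ?thesis by blast
    qed
    have lx: "(\<lambda>n. fst (p n)) \<longlonglongrightarrow> x"
      by (rule metric_LIMSEQ_I, rule lim1[of fst]) (use p in auto)
    have ly: "(\<lambda>n. snd (p n)) \<longlonglongrightarrow> y"
      by (rule metric_LIMSEQ_I, rule lim1[of snd]) (use p in auto)
    let ?f = "(\<lambda>a. if \<exists>i. a i then fst (p (LEAST i. a i)) else x)"
    let ?g = "(\<lambda>a. if \<exists>i. a i then snd (p (LEAST i. a i)) else y)"
    have "continuous_map cantor_space euclidean ?f" by (rule cont_seq[OF lx])
    moreover have "continuous_map cantor_space euclidean ?g" by (rule cont_seq[OF ly])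
    moreover have "(\<lambda>(a, b). (?f a, ?g b)) ` A01 \<subseteq> A0" using xy by (auto simp: A01_def)
    moreover have "(\<lambda>(a, b). (?f a, ?g b)) ` A11 \<subseteq> A1"
    proof
      fix q assume "q \<in> (\<lambda>(a, b). (?f a, ?g b)) ` A11"
      then obtain i \<alpha> \<beta> where "q = (?f (zo i \<alpha>), ?g (zo i \<beta>))" by (auto simp: A11_def)
      then have "q = (fst (p i), snd (p i))" using zo_ex zo_least by simp
      then show "q \<in> A1" using p[of i] by simp
    qed
    ultimately show ?thesis by (intro exI conjI)
  qed
  show ?thesis using 1 2 by (cases ?P) auto
qed

end
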